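(* If $\sum_{i=1}^M b_i\ge1$, then for every $\epsilon>0$, $$\bar\Delta_{\mathrm{opt}}(\epsilon)\le\bar\Delta(\mathbf r^\star)\le\sum_{i=1}^M\Big[\frac{w_i\,e^{x^\star\epsilon}\big(1+\frac1{x^\star}\big)}{\min\{b_i,\beta^\star\sqrt{w_i}\}}+w_i\Big],$$ where $\mathbf r^\star$, $x^\star$, $\beta^\star$ are as in the energy-adequate solution.
   Context: Fix an integer $M\ge1$, weights $w_1,\dots,w_M>0$, constants $b_1,\dots,b_M>0$, and $\epsilon>0$. For $\mathbf r\in(0,\infty)^M$ write $S(\mathbf r)=\sum_{i=1}^M r_i$ and define $$\bar\Delta(\mathbf r)=\sum_{l=1}^M \frac{w_l e^{-r_l\epsilon}}{r_l}\, e^{\epsilon S(\mathbf r)}\big(1+S(\mathbf r)\big)+\sum_{l=1}^M w_l,\qquad \sigma_l(\mathbf r)=\frac{(1-e^{-r_l\epsilon})S(\mathbf r)+r_le^{-r_l\epsilon}}{S(\mathbf r)+1}.$$ Problem 1: minimize $\bar\Delta(\mathbf r)$ over $\mathbf r\in(0,\infty)^M$ subject to $\sigma_l(\mathbf r)\le b_l$ for all $l$; its optimal (infimum) value is $\bar\Delta_{\mathrm{opt}}(\epsilon)$. Energy-adequate solution (when $\sum_i b_i\ge1$): let $\beta^\star\in[0,\max_l b_l/\sqrt{w_l}]$ be the root of $\sum_{i=1}^M\min\{b_i,\beta^\star\sqrt{w_i}\}=1$, let $x^\star=-\tfrac12+\sqrt{\tfrac14+\tfrac1\epsilon}$, and set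 $r^\star_l=\min\{b_l,\beta^\star\sqrt{w_l}\}\,x^\star$. *)

theory Defs
  imports Complex_Main
begin

text \<open>Indices run over {1..M}; vectors r in (0,inf)^M are functions nat => real,
  only their values on {1..M} matter.\<close>

definition Ssum :: "nat \<Rightarrow> (nat \<Rightarrow> real) \<Rightarrow> real" where
  "Ssum M r = (\<Sum>i=1..M. r i)"

definition Dbar :: "nat \<Rightarrow> (nat \<Rightarrow> real) \<Rightarrow> real \<Rightarrow> (nat \<Rightarrow> real) \<Rightarrow> real" where
  "Dbar M w eps r =
     (\<Sum>l=1..M. w l * exp (- r l * eps) / r l * exp (eps * Ssum M r) * (1 + Ssum M r))
     + (\<Sum>l=1..M. w l)"

definition sigma :: "nat \<Rightarrow> real \<Rightarrow> (nat \<Rightarrow> real) \<Rightarrow> nat \<Rightarrow> real" where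
  "sigma M eps r l =
     ((1 - exp (- r l * eps)) * Ssum M r + r l * exp (- r l * eps)) / (Ssum M r + 1)"

definition feasible :: "nat \<Rightarrow> (nat \<Rightarrow> real) \<Rightarrow> real \<Rightarrow> (nat \<Rightarrow> real) set" where
  "feasible M b eps = {r. (\<forall>i\<in>{1..M}. r i > 0) \<and> (\<forall>l\<in>{1..M}. sigma M eps r l \<le> b l)}"

definition Dopt :: "nat \<Rightarrow> (nat \<Rightarrow> real) \<Rightarrow> (nat \<Rightarrow> real) \<Rightarrow> real \<Rightarrow> real" where
  "Dopt M w b eps = Inf (Dbar M w eps ` feasible M b eps)"

definition xstar :: "real \<Rightarrow> real" where
  "xstar eps = - 1/2 + sqrt (1/4 + 1/eps)"

definition rstar :: "(nat \<Rightarrow> real) \<Rightarrow> (nat \<Rightarrow> real) \<Rightarrow> real \<Rightarrow> real \<Rightarrow> nat \<Rightarrow> real" where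
  "rstar w b beta eps l = min (b l) (beta * sqrt (w l)) * xstar eps"

end

theory Submission
  imports Defs
begin

theorem lemma2:
  fixes M :: nat and w b :: "nat \<Rightarrow> real" and eps beta :: real
  assumes "M \<ge> 1"
    and "\<forall>i\<in>{1..M}. w i > 0"
    and "\<forall>i\<in>{1..M}. b i > 0"
    and "(\<Sum>i=1..M. b i) \<ge> 1"
    and "eps > 0"
    and "0 \<le> beta" and "beta \<le> Max ((\<lambda>l. b l / sqrt (w l)) ` {1..M})"
    and "(\<Sum>i=1..M. min (b i) (beta * sqrt (w i))) = 1"
  shows "Dopt M w b eps \<le> Dbar M w eps (rstar w b beta eps)
       \<and> Dbar M w eps (rstar w b beta eps)
           \<le> (\<Sum>i=1..M. w i * exp (xstar eps * eps) * (1 + 1 / xstar eps)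
                          / min (b i) (beta * sqrt (w i)) + w i)"
proof -
  define x where "x = xstar eps"
  define m where "m = (\<lambda>i. min (b i) (beta * sqrt (w i)))"
  have bpos: "beta > 0"
  proof (rule ccontr)
    assume "\<not> beta > 0"
    hence "beta = 0" using assms(6) by simp
    hence "\<forall>i\<in>{1..M}. m i = 0" using assms(3) unfolding m_def by auto
    hence "(\<Sum>i=1..M. m i) = 0" by simp
    thus False using assms(8) unfolding m_def by simp
  qed
  have mpos: "m i > 0" if "i \<in> {1..M}" for i
    using assms(2,3) that bpos unfolding m_def by auto
  have mb: "m i \<le> b i" for i unfolding m_def by simp
  have msum: "(\<Sum>i=1..M. m i) = 1" using assms(8) unfolding m_def by simp
  define s where "s = sqrt (1/4 + 1/eps)"
  have s2: "s^2 = 1/4 + 1/eps" unfolding s_def using assms(5) by simp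
  have shalf: "s > 1/2"
  proof -
    have "sqrt (1/4) < s" unfolding s_def using assms(5) by (intro real_sqrt_less_mono) simp
    moreover have "sqrt (1/4::real) = 1/2" by (simp add: real_sqrt_divide)
    ultimately show ?thesis by simp
  qed
  have xs: "x = s - 1/2" unfolding x_def xstar_def s_def by simp
  have xpos: "x > 0" using xs shalf by simp
  have xx: "x * (x+1) = 1/eps"
  proof -
    have "x * (x+1) = s^2 - 1/4" unfolding xs by (simp add: power2_eq_square algebra_simps)
    thus ?thesis using s2 by simp
  qed
  have r_eq: "rstar w b beta eps = (\<lambda>i. m i * x)" unfolding rstar_def m_def x_def by auto
  have S: "Ssum M (rstar w b beta eps) = x"
    unfolding Ssum_def r_eq using msum by (simp add: sum_distrib_right[symmetric])
  have feas: "rstar w b beta eps \<in> feasible M b eps"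
    unfolding feasible_def
  proof (intro CollectI conjI ballI)
    fix i assume i: "i \<in> {1..M}"
    show "rstar w b beta eps i > 0" using mpos[OF i] xpos r_eq by simp
  next
    fix l assume l: "l \<in> {1..M}"
    define a where "a = m l * x * eps"
    have ml: "m l > 0" using mpos[OF l] .
    have e1: "1 - exp (- a) \<le> a" using exp_ge_add_one_self[of "-a"] by simp
    have e2: "exp (- a) \<le> 1" using ml xpos assms(5) unfolding a_def by simp
    have e3: "exp (- a) > 0" by simp
    have A: "(1 - exp (- a)) * x \<le> a * x" using e1 xpos by (simp add: mult_right_mono)
    have B: "a * x = m l * x / (x+1)"
    proof -
      have x1: "x + 1 > 0" using xpos by simp
      have "a * x * (x+1) = m l * x * (eps * (x * (x+1)))" unfolding a_def by (simp add: algebra_simps)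
      also have "\<dots> = m l * x" using xx assms(5) by simp
      finally show ?thesis using x1 by (simp add: eq_divide_eq)
    qed
    have C: "m l * x * exp (-a) \<le> m l * x" using e2 ml xpos by simp
    have D: "m l * x / (x+1) + m l * x \<le> b l * (x + 1)"
    proof -
      have "m l * x / (x+1) + m l * x = m l * (x*(x+2)) / (x+1)" using xpos by (simp add: field_simps)
      also have "\<dots> \<le> b l * ((x+1)^2) / (x+1)"
        apply (rule divide_right_mono)
         apply (rule mult_mono) using mb[of l] ml xpos by (auto simp: power2_eq_square algebra_simps)
      also have "\<dots> = b l * (x+1)" using xpos by (simp add: power2_eq_square)
      finally show ?thesis .
    qed
    have "(1 - exp (- a)) * x + m l * x * exp (- a) \<le> b l * (x + 1)" using A B C D by linarith
    moreover have "rstar w b beta eps l * eps = a" unfolding a_def r_eq by simp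
    ultimately show "sigma M eps (rstar w b beta eps) l \<le> b l"
      unfolding sigma_def S using xpos r_eq by (simp add: divide_le_eq mult.commute)
  qed
  have bdd: "bdd_below (Dbar M w eps ` feasible M b eps)"
  proof (rule bdd_belowI[where m=0])
    fix y assume "y \<in> Dbar M w eps ` feasible M b eps"
    then obtain r where r: "r \<in> feasible M b eps" and y: "y = Dbar M w eps r" by auto
    have rp: "\<forall>i\<in>{1..M}. r i > 0" using r unfolding feasible_def by auto
    have Sp: "Ssum M r \<ge> 0" unfolding Ssum_def using rp by (intro sum_nonneg) (auto simp: less_imp_le)
    have "0 \<le> (\<Sum>l=1..M. w l * exp (- r l * eps) / r l * exp (eps * Ssum M r) * (1 + Ssum M r))"
      using rp assms(2) Sp by (intro sum_nonneg) (auto intro!: mult_nonneg_nonneg divide_nonneg_nonneg simp: less_imp_le)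
    moreover have "0 \<le> (\<Sum>l=1..M. w l)" using assms(2) by (intro sum_nonneg) (auto simp: less_imp_le)
    ultimately show "0 \<le> y" unfolding y Dbar_def by simp
  qed
  have P1: "Dopt M w b eps \<le> Dbar M w eps (rstar w b beta eps)"
    unfolding Dopt_def by (rule cInf_lower) (use feas bdd in auto)
  have P2: "Dbar M w eps (rstar w b beta eps)
           \<le> (\<Sum>i=1..M. w i * exp (x * eps) * (1 + 1 / x) / m i + w i)"
  proof -
    have "Dbar M w eps (rstar w b beta eps) =
       (\<Sum>l=1..M. w l * exp (- (m l * x) * eps) / (m l * x) * exp (eps * x) * (1 + x) + w l)"
      unfolding Dbar_def S by (simp add: r_eq sum.distrib)
    also have "\<dots> \<le> (\<Sum>i=1..M. w i * exp (x * eps) * (1 + 1 / x) / m i + w i)"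
    proof (rule sum_mono)
      fix l assume l: "l \<in> {1..M}"
      have ml: "m l > 0" using mpos[OF l] .
      have wl: "w l > 0" using assms(2) l by auto
      have e: "exp (- (m l * x) * eps) \<le> 1" using ml xpos assms(5) by simp
      have "w l * exp (- (m l * x) * eps) / (m l * x) * exp (eps * x) * (1 + x)
          = exp (- (m l * x) * eps) * (w l * exp (x * eps) * (1 + 1 / x) / m l)"
        using ml xpos by (simp add: field_simps mult.commute)
      also have "\<dots> \<le> 1 * (w l * exp (x * eps) * (1 + 1 / x) / m l)"
        apply (rule mult_right_mono[OF e]) using ml xpos wl by simp
      finally show "w l * exp (- (m l * x) * eps) / (m l * x) * exp (eps * x) * (1 + x) + w l
          \<le> w l * exp (x * eps) * (1 + 1 / x) / m l + w l" by simp
    qed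
    finally show ?thesis .
  qed
  show ?thesis using P1 P2 unfolding x_def m_def by simp
qed

end
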